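(* Let $d\ge2$, $p\in]1,+\infty[$, $q\in[1,p]$, $0<R_1<R_2<+\infty$. There is a constant $C=C(d,p,q,R_1,R_2)>0$ such that for all bounded open convex sets $\Omega_0,\Theta\subset\mathbb{R}^d$ with $\overline\Theta\subset\Omega_0$, $P(\Omega_0)=P(B_{R_2})$ and $|\Omega_0\setminus\overline\Theta|=|A_{R_1,R_2}|$, if $\tilde\sigma_{p,q}(\Omega_0\setminus\overline\Theta)\ge\frac12\tilde\sigma_{p,q}(A_{R_1,R_2})$ then $\operatorname{diam}(\Omega_0)\le C$.
   Context: $A_{R_1,R_2}=B_{R_2}\setminus\overline{B_{R_1}}$. $\tilde\sigma_{p,q}(\Omega_0\setminus\overline\Theta)=\min_{\psi\in W^{1,p}(\Omega_0\setminus\overline\Theta),\psi\not\equiv0}\left(\int_{\Omega_0\setminus\overline\Theta}|\nabla\psi|^p+|\psi|^p\,dx\right)^{1/p}/\left(\int_{\partial\Omega_0}|\psi|^q\,d\mathcal H^{d-1}\right)^{1/q}$. *)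

theory Defs
  imports "HOL-Analysis.Analysis"
begin

text \<open>s-dimensional Hausdorff outer measure (normalised so that it agrees with
  Lebesgue measure for integer s = dimension), via the Caratheodory construction
  with countable covers by bounded sets of diameter < delta.\<close>
definition hausdorff_outer :: "real \<Rightarrow> 'a::euclidean_space set \<Rightarrow> ennreal" where
  "hausdorff_outer s A =
     (SUP \<delta>\<in>{0<..}. INF C\<in>{C::nat \<Rightarrow> 'a set. A \<subseteq> (\<Union>i. C i) \<and>
                              (\<forall>i. bounded (C i) \<and> diameter (C i) < \<delta>)}.
        (\<Sum>i. ennreal (unit_ball_vol s * (diameter (C i) / 2) powr s)))"

definition hausdorff_measure :: "real \<Rightarrow> 'a::euclidean_space measure" where
  "hausdorff_measure s = measure_of UNIV (sets borel) (hausdorff_outer s)"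

definition C1c_field :: "'a::euclidean_space set \<Rightarrow> ('a \<Rightarrow> 'b::euclidean_space)
                           \<Rightarrow> ('a \<Rightarrow> ('a \<Rightarrow>\<^sub>L 'b)) \<Rightarrow> bool" where
  "C1c_field U f Df \<longleftrightarrow>
     (\<forall>x. (f has_derivative blinfun_apply (Df x)) (at x)) \<and> continuous_on UNIV Df \<and>
     (\<exists>K. compact K \<and> K \<subseteq> U \<and> (\<forall>x. x \<notin> K \<longrightarrow> f x = 0))"

definition perimeter :: "'a::euclidean_space set \<Rightarrow> ereal" where
  "perimeter E = (SUP (\<phi>, D\<phi>)\<in>{(\<phi>, D\<phi>). C1c_field UNIV \<phi> D\<phi> \<and> (\<forall>x. norm (\<phi> x) \<le> 1)}.
       ereal (set_lebesgue_integral lebesgue E (\<lambda>x. \<Sum>b\<in>Basis. (blinfun_apply (D\<phi> x) b) \<bullet> b)))"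

definition weak_grad_W1p :: "real \<Rightarrow> 'a::euclidean_space set \<Rightarrow> ('a \<Rightarrow> real) \<Rightarrow> ('a \<Rightarrow> 'a) \<Rightarrow> bool" where
  "weak_grad_W1p p U \<psi> g \<longleftrightarrow>
     set_borel_measurable lebesgue U \<psi> \<and> set_borel_measurable lebesgue U g \<and>
     set_integrable lebesgue U (\<lambda>x. \<bar>\<psi> x\<bar> powr p) \<and>
     set_integrable lebesgue U (\<lambda>x. norm (g x) powr p) \<and>
     (\<forall>\<phi> D\<phi>. C1c_field U \<phi> D\<phi> \<longrightarrow>
        (\<forall>i\<in>Basis. set_lebesgue_integral lebesgue U (\<lambda>x. \<psi> x * blinfun_apply (D\<phi> x) i)
                   = - set_lebesgue_integral lebesgue U (\<lambda>x. (g x \<bullet> i) * \<phi> x)))"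

definition trace_at :: "'a::euclidean_space set \<Rightarrow> ('a \<Rightarrow> real) \<Rightarrow> 'a \<Rightarrow> real" where
  "trace_at U \<psi> x = Lim (at_right 0)
     (\<lambda>r. set_lebesgue_integral lebesgue (ball x r \<inter> U) \<psi> / measure lebesgue (ball x r \<inter> U))"

text \<open>tilde sigma_{p,q}(Omega0 \ closure Theta) with trace integral on the outer boundary.
  Functions with vanishing boundary trace have quotient +\<infinity> and are irrelevant to the infimum.\<close>
definition steklov_sigma :: "real \<Rightarrow> real \<Rightarrow> 'a::euclidean_space set \<Rightarrow> 'a set \<Rightarrow> real" where
  "steklov_sigma p q \<Omega>0 \<Theta> =
    (let U = \<Omega>0 - closure \<Theta>;
         T = (\<lambda>\<psi>. \<integral>\<^sup>+x\<in>frontier \<Omega>0. ennreal (\<bar>trace_at U \<psi> x\<bar> powr q)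
                      \<partial>(hausdorff_measure (real DIM('a) - 1)))
     in Inf {(set_lebesgue_integral lebesgue U (\<lambda>x. norm (g x) powr p + \<bar>\<psi> x\<bar> powr p)) powr (1/p)
              / (enn2real (T \<psi>)) powr (1/q) | \<psi> g.
             weak_grad_W1p p U \<psi> g \<and> 0 < T \<psi> \<and> T \<psi> < \<infinity>})"

end

theory Submission
  imports Defs
begin


definition res :: "'a::euclidean_space \<Rightarrow> (nat \<Rightarrow> 'a) \<Rightarrow> nat \<Rightarrow> 'a \<Rightarrow> 'a" where
  "res a0 f k x = (x - a0) - (\<Sum>i\<in>{1..<k}. ((x - a0) \<bullet> f i) *\<^sub>R f i)"

lemma res_Suc:
  assumes "1 \<le> k"
  shows "res a0 f (Suc k) x = res a0 f k x - ((x - a0) \<bullet> f k) *\<^sub>R f k"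
  using assms by (simp add: res_def algebra_simps)

lemma res_orth:
  assumes orth: "\<And>i j. i \<in> {1..<k} \<Longrightarrow> j \<in> {1..<k} \<Longrightarrow> i \<noteq> j \<Longrightarrow> f i \<bullet> f j = 0"
    and un: "\<And>i. i \<in> {1..<k} \<Longrightarrow> norm (f i) = 1"
    and i: "i \<in> {1..<k}"
  shows "res a0 f k x \<bullet> f i = 0"
proof -
  have "(\<Sum>l\<in>{1..<k}. ((x - a0) \<bullet> f l) *\<^sub>R f l) \<bullet> f i = (\<Sum>l\<in>{1..<k}. ((x - a0) \<bullet> f l) * (f l \<bullet> f i))"
    by (simp add: inner_sum_left)
  also have "\<dots> = (\<Sum>l\<in>{i}. ((x - a0) \<bullet> f l) * (f l \<bullet> f i))"
    by (rule sum.mono_neutral_right) (use i orth in auto)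
  also have "\<dots> = (x - a0) \<bullet> f i"
    using un[OF i] by (simp add: dot_square_norm)
  finally show ?thesis by (simp add: res_def inner_diff_left)
qed

lemma res_span: "(x - a0) - res a0 f k x \<in> span (f ` {1..<k})"
  unfolding res_def by (simp, intro span_sum span_scale span_base imageI, simp)

lemma continuous_res: "continuous_on S (res a0 f k)"
  unfolding res_def by (intro continuous_intros)


lemma res_cong: "(\<And>i. i \<in> {1..<k} \<Longrightarrow> f i = g i) \<Longrightarrow> res a0 f k x = res a0 g k x"
  unfolding res_def by (intro arg_cong2[where f="(-)"] refl sum.cong) auto

lemma norm_proj_le:
  fixes r u :: "'a::euclidean_space"
  assumes "norm u = 1"
  shows "norm (r - (r \<bullet> u) *\<^sub>R u) \<le> norm r"
proof -
  have uu: "u \<bullet> u = 1" using assms by (simp add: dot_square_norm)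
  have "(r - (r \<bullet> u) *\<^sub>R u) \<bullet> (r - (r \<bullet> u) *\<^sub>R u) = r \<bullet> r - (r \<bullet> u)^2"
    by (simp add: inner_diff_left inner_diff_right inner_commute uu power2_eq_square algebra_simps)
  then have "(norm (r - (r \<bullet> u) *\<^sub>R u))^2 = (norm r)^2 - (r \<bullet> u)^2"
    by (simp add: power2_norm_eq_inner)
  then have "(norm (r - (r \<bullet> u) *\<^sub>R u))^2 \<le> (norm r)^2" by simp
  then show ?thesis by (simp add: power_mono_iff)
qed

lemma res_inner_self:
  assumes orth: "\<And>i. i \<in> {1..<k} \<Longrightarrow> f i \<bullet> f k = 0"
  shows "res a0 f k x \<bullet> f k = (x - a0) \<bullet> f k"
proof -
  have "(\<Sum>l\<in>{1..<k}. ((x - a0) \<bullet> f l) *\<^sub>R f l) \<bullet> f k = 0"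
    by (simp add: inner_sum_left orth)
  then show ?thesis by (simp add: res_def inner_diff_left)
qed

lemma frame_step:
  fixes K :: "'a::euclidean_space set"
  assumes K: "compact K" "interior K \<noteq> {}" and a0: "a0 \<in> K" and k: "k < DIM('a)"
  shows "\<exists>a\<in>K. norm (res a0 f (Suc k) a) > 0 \<and> (\<forall>x\<in>K. norm (res a0 f (Suc k) x) \<le> norm (res a0 f (Suc k) a))"
proof -
  have "continuous_on K (\<lambda>x. norm (res a0 f (Suc k) x))"
    by (intro continuous_on_norm continuous_res)
  then obtain a where a: "a \<in> K" "\<And>y. y \<in> K \<Longrightarrow> norm (res a0 f (Suc k) y) \<le> norm (res a0 f (Suc k) a)"
    using continuous_attains_sup[OF K(1)] a0 by blast
  have "norm (res a0 f (Suc k) a) > 0"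
  proof (rule ccontr)
    assume "\<not> ?thesis"
    then have z: "\<And>y. y \<in> K \<Longrightarrow> res a0 f (Suc k) y = 0"
      using a(2) by (metis norm_le_zero_iff not_less order.trans)
    let ?S = "span (f ` {1..<Suc k})"
    have "x - a0 \<in> ?S" if "x \<in> K" for x
      using res_span[of x a0 f "Suc k"] z[OF that] by simp
    then have sub: "(\<lambda>x. x - a0) ` K \<subseteq> ?S" by auto
    have "dim ((\<lambda>x. x - a0) ` K) \<le> dim ?S" by (rule dim_subset[OF sub])
    also have "\<dots> \<le> card (f ` {1..<Suc k})" by (simp add: dim_le_card')
    also have "\<dots> \<le> card {1..<Suc k}" by (rule card_image_le) simp
    also have "\<dots> < DIM('a)" using k by simp
    finally have "interior ((\<lambda>x. x - a0) ` K) = {}" by (rule empty_interior_lowdim)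
    moreover have "(\<lambda>x. x - a0) ` K = (\<lambda>x. (- a0) + x) ` K" by simp
    ultimately have "(\<lambda>x. (- a0) + x) ` interior K = {}" by (simp only: interior_translation)
    then show False using K(2) by simp
  qed
  then show ?thesis using a by blast
qed

definition frame_ok :: "'a::euclidean_space set \<Rightarrow> 'a \<Rightarrow> (nat \<Rightarrow> 'a) \<Rightarrow> (nat \<Rightarrow> real) \<Rightarrow> nat \<Rightarrow> bool" where
  "frame_ok K a0 f h k \<longleftrightarrow>
    (\<forall>j\<in>{1..k}. norm (f j) = 1 \<and> h j > 0 \<and> (\<forall>x\<in>K. norm (res a0 f j x) \<le> h j) \<and>
                (\<exists>a\<in>K. res a0 f j a = h j *\<^sub>R f j)) \<and>
    (\<forall>i\<in>{1..k}. \<forall>j\<in>{1..k}. i \<noteq> j \<longrightarrow> f i \<bullet> f j = 0) \<and>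
    (\<forall>i j. 1 \<le> i \<longrightarrow> i \<le> j \<longrightarrow> j \<le> k \<longrightarrow> h j \<le> h i)"

lemma frame_exists:
  fixes K :: "'a::euclidean_space set"
  assumes K: "compact K" "interior K \<noteq> {}" and a0: "a0 \<in> K"
  shows "k \<le> DIM('a) \<Longrightarrow> \<exists>f h. frame_ok K a0 f h k"
proof (induction k)
  case 0
  then show ?case by (auto simp: frame_ok_def)
next
  case (Suc k)
  then obtain f h where fh: "frame_ok K a0 f h k" by auto
  have orth: "\<And>i j. i \<in> {1..k} \<Longrightarrow> j \<in> {1..k} \<Longrightarrow> i \<noteq> j \<Longrightarrow> f i \<bullet> f j = 0"
    and un: "\<And>i. i \<in> {1..k} \<Longrightarrow> norm (f i) = 1"
    and mx: "\<And>j x. j \<in> {1..k} \<Longrightarrow> x \<in> K \<Longrightarrow> norm (res a0 f j x) \<le> h j"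
    and mono: "\<And>i j. 1 \<le> i \<Longrightarrow> i \<le> j \<Longrightarrow> j \<le> k \<Longrightarrow> h j \<le> h i"
    using fh unfolding frame_ok_def by blast+
  obtain a where a: "a \<in> K" "norm (res a0 f (Suc k) a) > 0"
     "\<And>x. x \<in> K \<Longrightarrow> norm (res a0 f (Suc k) x) \<le> norm (res a0 f (Suc k) a)"
    using frame_step[OF K a0, of k f] Suc.prems by auto
  define hh where "hh = norm (res a0 f (Suc k) a)"
  define v where "v = (1/hh) *\<^sub>R res a0 f (Suc k) a"
  define f' where "f' = f(Suc k := v)"
  define h' where "h' = h(Suc k := hh)"
  have hh: "hh > 0" using a by (simp add: hh_def)
  have vn: "norm v = 1" using hh by (simp add: v_def hh_def)
  have resv: "res a0 f (Suc k) a = hh *\<^sub>R v" using hh by (simp add: v_def)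
  have vorth: "f i \<bullet> v = 0" if "i \<in> {1..k}" for i
  proof -
    have "res a0 f (Suc k) a \<bullet> f i = 0"
      by (rule res_orth) (use that orth un in auto)
    then show ?thesis by (simp add: v_def inner_commute)
  qed
  have rescong: "res a0 f' j x = res a0 f j x" if "j \<le> Suc k" for j x
    by (rule res_cong) (use that in \<open>auto simp: f'_def\<close>)
  have hhle: "hh \<le> h k" if "1 \<le> k"
  proof -
    have "res a0 f (Suc k) a = res a0 f k a - (res a0 f k a \<bullet> f k) *\<^sub>R f k"
      using res_Suc[OF that] res_inner_self[of k f a0 a] orth that by auto
    then have "hh \<le> norm (res a0 f k a)"
      using norm_proj_le[of "f k" "res a0 f k a"] un that by (simp add: hh_def)
    also have "\<dots> \<le> h k" using mx[of k a] a that by auto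
    finally show ?thesis .
  qed
  have "frame_ok K a0 f' h' (Suc k)"
    unfolding frame_ok_def
  proof (intro conjI)
   show "\<forall>j\<in>{1..Suc k}. norm (f' j) = 1 \<and> h' j > 0 \<and> (\<forall>x\<in>K. norm (res a0 f' j x) \<le> h' j) \<and>
                (\<exists>a\<in>K. res a0 f' j a = h' j *\<^sub>R f' j)"
   proof
    fix j assume j: "j \<in> {1..Suc k}"
    show "norm (f' j) = 1 \<and> h' j > 0 \<and> (\<forall>x\<in>K. norm (res a0 f' j x) \<le> h' j) \<and>
                (\<exists>a\<in>K. res a0 f' j a = h' j *\<^sub>R f' j)"
    proof (cases "j = Suc k")
      case True
      have "f' j = v" "h' j = hh" using True by (simp_all add: f'_def h'_def)
      moreover have "\<And>x. res a0 f' j x = res a0 f (Suc k) x" using rescong[of j] True by simp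
      moreover have "\<forall>x\<in>K. norm (res a0 f (Suc k) x) \<le> hh" using a(3) unfolding hh_def by blast
      ultimately show ?thesis using vn hh a(1) resv by auto
    next
      case False
      then have jk: "j \<in> {1..k}" using j by auto
      have "f' j = f j" "h' j = h j" using False by (simp_all add: f'_def h'_def)
      moreover have "\<And>x. res a0 f' j x = res a0 f j x" using rescong[of j] jk by simp
      moreover have "norm (f j) = 1 \<and> h j > 0 \<and> (\<forall>x\<in>K. norm (res a0 f j x) \<le> h j) \<and>
                (\<exists>a\<in>K. res a0 f j a = h j *\<^sub>R f j)"
        using fh jk unfolding frame_ok_def by blast
      ultimately show ?thesis by simp
    qed
   qed
  next
   show "\<forall>i\<in>{1..Suc k}. \<forall>j\<in>{1..Suc k}. i \<noteq> j \<longrightarrow> f' i \<bullet> f' j = 0"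
   proof (intro ballI impI)
    fix i j assume "i \<in> {1..Suc k}" "j \<in> {1..Suc k}" "i \<noteq> j"
    then show "f' i \<bullet> f' j = 0"
      using orth vorth by (cases "i = Suc k"; cases "j = Suc k") (auto simp: f'_def inner_commute)
   qed
  next
   show "\<forall>i j. 1 \<le> i \<longrightarrow> i \<le> j \<longrightarrow> j \<le> Suc k \<longrightarrow> h' j \<le> h' i"
   proof (intro allI impI)
    fix i j :: nat assume "1 \<le> i" "i \<le> j" "j \<le> Suc k"
    then show "h' j \<le> h' i"
      using mono hhle
      by (cases "i = Suc k"; cases "j = Suc k") (auto simp: h'_def intro: order.trans)
   qed
  qed
  then show ?case by blast
qed

lemma frame_coord_bound:
  assumes fr: "frame_ok K a0 f h n" and j: "j \<in> {1..n}" and x: "x \<in> K"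
  shows "\<bar>(x - a0) \<bullet> f j\<bar> \<le> h j"
proof -
  have orth: "\<And>i. i \<in> {1..<j} \<Longrightarrow> f i \<bullet> f j = 0" using fr j unfolding frame_ok_def by auto
  have un: "norm (f j) = 1" and mx: "norm (res a0 f j x) \<le> h j" using fr j x unfolding frame_ok_def by auto
  have "\<bar>(x - a0) \<bullet> f j\<bar> = \<bar>res a0 f j x \<bullet> f j\<bar>" using res_inner_self[of j f a0 x] orth by simp
  also have "\<dots> \<le> norm (res a0 f j x) * norm (f j)" by (rule Cauchy_Schwarz_ineq2)
  also have "\<dots> \<le> h j" using un mx by simp
  finally show ?thesis .
qed

lemma span_orth_inner:
  assumes "u \<in> span S" "\<And>x. x \<in> S \<Longrightarrow> x \<bullet> v = 0"
  shows "u \<bullet> v = 0"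
proof -
  have "subspace {x. x \<bullet> v = 0}" by (auto simp: subspace_def inner_add_left)
  then have "span S \<subseteq> {x. x \<bullet> v = 0}" using assms(2) by (intro span_minimal) auto
  then show ?thesis using assms(1) by auto
qed

lemma frame_ball_claim:
  fixes K :: "'a::euclidean_space set"
  assumes conv: "convex K" and fr: "frame_ok K a0 f h n" and a0: "a0 \<in> K"
  shows "k \<le> n \<Longrightarrow> \<exists>g\<in>K. g - a0 \<in> span (f ` {1..k}) \<and>
     (\<forall>w\<in>span (f ` {1..k}). (\<forall>j\<in>{1..k}. \<bar>w \<bullet> f j\<bar> \<le> (1/12)^k * h j) \<longrightarrow> g + w \<in> K)"
proof (induction k)
  case 0
  show ?case using a0 by (auto simp: span_empty)
next
  case (Suc k)
  define c where "c = (1/12::real)^k"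
  have c: "c > 0" "c \<le> 1" by (auto simp: c_def power_le_one)
  obtain g where g: "g \<in> K" "g - a0 \<in> span (f ` {1..k})"
    and gw: "\<And>w. w \<in> span (f ` {1..k}) \<Longrightarrow> (\<forall>j\<in>{1..k}. \<bar>w \<bullet> f j\<bar> \<le> c * h j) \<Longrightarrow> g + w \<in> K"
    using Suc by (auto simp: c_def)
  have k1: "Suc k \<in> {1..n}" using Suc.prems by auto
  define hh where "hh = h (Suc k)"
  define v where "v = f (Suc k)"
  have hh: "hh > 0" and vn: "norm v = 1" using fr k1 unfolding frame_ok_def hh_def v_def by auto
  obtain a where a: "a \<in> K" "res a0 f (Suc k) a = hh *\<^sub>R v"
    using fr k1 unfolding frame_ok_def hh_def v_def by blast
  have orthv: "f j \<bullet> v = 0" if "j \<in> {1..k}" for j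
    using fr that k1 unfolding frame_ok_def v_def by auto
  have spk: "{1..<Suc k} = {1..k}" by auto
  define q where "q = a - hh *\<^sub>R v"
  have "a - a0 - res a0 f (Suc k) a \<in> span (f ` {1..k})"
    using res_span[of a a0 f "Suc k"] unfolding spk .
  then have q: "q - a0 \<in> span (f ` {1..k})"
    by (simp add: q_def a(2) algebra_simps)
  have S1: "f ` {1..Suc k} = insert v (f ` {1..k})" by (auto simp: v_def atLeastAtMostSuc_conv)
  have spsub: "span (f ` {1..k}) \<subseteq> span (f ` {1..Suc k})" by (intro span_mono image_mono) auto
  have vsp: "v \<in> span (f ` {1..Suc k})" unfolding S1 by (rule span_base) simp
  define g' where "g' = (1/2) *\<^sub>R (g + a)"
  have aa0: "a - a0 \<in> span (f ` {1..Suc k})"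
  proof -
    have "a - a0 = (q - a0) + hh *\<^sub>R v" by (simp add: q_def)
    then show ?thesis using q spsub vsp by (metis span_add span_scale subsetD)
  qed
  have g'a0: "g' - a0 \<in> span (f ` {1..Suc k})"
  proof -
    have "g' - a0 = (1/2) *\<^sub>R (g - a0) + (1/2) *\<^sub>R (a - a0)"
      by (simp add: g'_def algebra_simps flip: scaleR_add_left)
    then show ?thesis using g(2) spsub aa0 by (metis span_add span_scale subsetD)
  qed
  have g'K: "g' \<in> K"
    using convexD[OF conv g(1) a(1), of "1/2" "1/2"] by (simp add: g'_def scaleR_add_right)
  show ?case
  proof (intro bexI[of _ g'] conjI g'a0 ballI impI)
    show "g' \<in> K" by fact
    fix w' assume w': "w' \<in> span (f ` {1..Suc k})"
      and wb: "\<forall>j\<in>{1..Suc k}. \<bar>w' \<bullet> f j\<bar> \<le> (1/12)^Suc k * h j"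
    have cc: "(1/12::real)^Suc k = c/12" by (simp add: c_def)
    obtain lam where lam: "w' - lam *\<^sub>R v \<in> span (f ` {1..k})"
      using w' unfolding S1 span_insert by auto
    define u where "u = w' - lam *\<^sub>R v"
    have u: "u \<in> span (f ` {1..k})" and wu: "w' = u + lam *\<^sub>R v" using lam by (simp_all add: u_def)
    have uv: "u \<bullet> v = 0" by (rule span_orth_inner[OF u]) (use orthv in auto)
    define s where "s = w' \<bullet> v"
    have slam: "s = lam" using uv vn by (simp add: s_def wu inner_add_left dot_square_norm)
    define tau where "tau = s / hh"
    have sb: "\<bar>s\<bar> \<le> c/12 * hh" using wb[rule_format, of "Suc k"] cc by (simp add: s_def v_def hh_def)
    have taub: "\<bar>tau\<bar> \<le> c/12" using sb hh by (simp add: tau_def abs_div pos_divide_le_eq)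
    define t' where "t' = 1/2 + tau"
    have t'01: "0 \<le> t'" "t' \<le> 1" "1 - t' \<ge> 5/12" using taub c by (auto simp: t'_def abs_le_iff)
    define w where "w = (1 / (1 - t')) *\<^sub>R (tau *\<^sub>R (g - q) + u)"
    have gq: "g - q = (g - a0) - (q - a0)" by simp
    have wsp: "w \<in> span (f ` {1..k})"
      unfolding w_def gq by (rule span_scale[OF span_add[OF span_scale[OF span_diff[OF g(2) q]] u]])
    have wb': "\<bar>w \<bullet> f j\<bar> \<le> c * h j" if j: "j \<in> {1..k}" for j
    proof -
      have jn: "j \<in> {1..n}" using j Suc.prems by auto
      have hj: "h j \<ge> 0" using fr jn unfolding frame_ok_def by fastforce
      have b1: "\<bar>(g - a0) \<bullet> f j\<bar> \<le> h j" by (rule frame_coord_bound[OF fr jn g(1)])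
      have "(q - a0) \<bullet> f j = (a - a0) \<bullet> f j" using orthv[OF j] by (simp add: q_def inner_diff_left inner_diff_right inner_commute)
      then have b2: "\<bar>(q - a0) \<bullet> f j\<bar> \<le> h j" using frame_coord_bound[OF fr jn a(1)] by simp
      have e1: "w' \<bullet> f j = u \<bullet> f j + lam * (v \<bullet> f j)" by (simp add: wu inner_add_left)
      have e2: "v \<bullet> f j = 0" using orthv[OF j] by (simp add: inner_commute)
      have "u \<bullet> f j = w' \<bullet> f j" using e1 e2 by simp
      then have b3: "\<bar>u \<bullet> f j\<bar> \<le> c/12 * h j" using wb j cc by auto
      have ex: "(tau *\<^sub>R (g - q) + u) \<bullet> f j = tau * ((g - a0) \<bullet> f j - (q - a0) \<bullet> f j) + u \<bullet> f j"
        by (simp add: inner_add_left inner_diff_left algebra_simps)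
      have xy: "\<bar>(g - a0) \<bullet> f j - (q - a0) \<bullet> f j\<bar> \<le> 2 * h j"
        using b1 b2 by linarith
      have "\<bar>tau\<bar> * \<bar>(g - a0) \<bullet> f j - (q - a0) \<bullet> f j\<bar> \<le> c/12 * (2 * h j)"
        by (rule mult_mono[OF taub xy]) (use c in auto)
      then have "\<bar>(tau *\<^sub>R (g - q) + u) \<bullet> f j\<bar> \<le> c/12 * (2 * h j) + c/12 * h j"
        unfolding ex using b3 abs_triangle_ineq[of "tau * ((g - a0) \<bullet> f j - (q - a0) \<bullet> f j)" "u \<bullet> f j"]
          abs_mult[of tau "(g - a0) \<bullet> f j - (q - a0) \<bullet> f j"] by linarith
      then have num: "\<bar>(tau *\<^sub>R (g - q) + u) \<bullet> f j\<bar> \<le> c/4 * h j" by simp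
      have "\<bar>w \<bullet> f j\<bar> = \<bar>(tau *\<^sub>R (g - q) + u) \<bullet> f j\<bar> / (1 - t')"
        using t'01 by (simp add: w_def abs_mult abs_div)
      also have "\<dots> \<le> (c/4 * h j) / (5/12)"
        by (rule frac_le) (use num t'01 c hj in auto)
      also have "\<dots> \<le> c * h j" using c hj by (simp add: field_simps)
      finally show ?thesis .
    qed
    have xK: "g + w \<in> K" using gw[OF wsp] wb' by auto
    have eq: "g' + w' = (1 - t') *\<^sub>R (g + w) + t' *\<^sub>R a"
    proof -
      have "(1 - t') *\<^sub>R (g + w) = (1 - t') *\<^sub>R g + (tau *\<^sub>R (g - q) + u)"
        using t'01 by (simp add: w_def scaleR_add_right)
      moreover have lt: "lam = hh * tau" using hh by (simp add: tau_def slam)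
      ultimately show ?thesis
        by (simp add: g'_def t'_def q_def wu lt algebra_simps)
    qed
    show "g' + w' \<in> K"
      unfolding eq using conv xK a(1) t'01 unfolding convex_def by auto
  qed
qed

lemma convex_body_ball_slab:
  fixes K :: "'a::euclidean_space set"
  assumes K: "compact K" "convex K" "interior K \<noteq> {}"
  shows "\<exists>g r e c. r > 0 \<and> norm e = 1 \<and> cball g r \<subseteq> K \<and> (\<forall>x\<in>K. \<bar>(x - c) \<bullet> e\<bar> \<le> 12^DIM('a) * r)"
proof -
  define n where "n = DIM('a)"
  have n1: "1 \<le> n" by (simp add: n_def DIM_positive Suc_le_eq)
  obtain a0 where a0: "a0 \<in> K" using K(3) interior_subset by blast
  obtain f h where fr: "frame_ok K a0 f h n"
    using frame_exists[OF K(1) K(3) a0, of n] by (auto simp: n_def)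
  obtain g where g: "g \<in> K"
    and gw: "\<And>w. w \<in> span (f ` {1..n}) \<Longrightarrow> (\<forall>j\<in>{1..n}. \<bar>w \<bullet> f j\<bar> \<le> (1/12)^n * h j) \<Longrightarrow> g + w \<in> K"
    using frame_ball_claim[OF K(2) fr a0, of n] by auto
  have un: "\<And>j. j \<in> {1..n} \<Longrightarrow> norm (f j) = 1" and hpos: "\<And>j. j \<in> {1..n} \<Longrightarrow> h j > 0"
    and orth: "\<And>i j. i \<in> {1..n} \<Longrightarrow> j \<in> {1..n} \<Longrightarrow> i \<noteq> j \<Longrightarrow> f i \<bullet> f j = 0"
    and mono: "\<And>i j. 1 \<le> i \<Longrightarrow> i \<le> j \<Longrightarrow> j \<le> n \<Longrightarrow> h j \<le> h i"
    using fr unfolding frame_ok_def by blast+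
  have inj: "inj_on f {1..n}"
  proof (rule inj_onI, rule ccontr)
    fix i j assume ij: "i \<in> {1..n}" "j \<in> {1..n}" "f i = f j" "i \<noteq> j"
    then have "f i \<bullet> f i = 0" using orth[of i j] by simp
    then show False using un[OF ij(1)] by simp
  qed
  have indep: "independent (f ` {1..n})"
  proof (rule pairwise_orthogonal_independent)
    show "pairwise orthogonal (f ` {1..n})"
      unfolding pairwise_def orthogonal_def using orth by (metis (no_types, lifting) imageE)
    show "0 \<notin> f ` {1..n}" using un by force
  qed
  have card: "card (f ` {1..n}) = n" using inj by (simp add: card_image)
  have spanU: "span (f ` {1..n}) = UNIV"
    using card_ge_dim_independent[of "f ` {1..n}" UNIV, OF _ indep] card by (auto simp: n_def)
  define r where "r = (1/12)^n * h n"
  have nn: "n \<in> {1..n}" using n1 by auto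
  have r: "r > 0" using hpos[OF nn] by (simp add: r_def)
  have "cball g r \<subseteq> K"
  proof
    fix y assume "y \<in> cball g r"
    then have ny: "norm (y - g) \<le> r" by (simp add: dist_norm norm_minus_commute)
    have "g + (y - g) \<in> K"
    proof (rule gw)
      show "y - g \<in> span (f ` {1..n})" using spanU by simp
      show "\<forall>j\<in>{1..n}. \<bar>(y - g) \<bullet> f j\<bar> \<le> (1/12)^n * h j"
      proof
        fix j assume j: "j \<in> {1..n}"
        have "\<bar>(y - g) \<bullet> f j\<bar> \<le> norm (y - g) * norm (f j)" by (rule Cauchy_Schwarz_ineq2)
        also have "\<dots> \<le> r" using un[OF j] ny by simp
        also have "\<dots> \<le> (1/12)^n * h j" unfolding r_def using mono[of j n] j by (auto intro: mult_left_mono)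
        finally show "\<bar>(y - g) \<bullet> f j\<bar> \<le> (1/12)^n * h j" .
      qed
    qed
    then show "y \<in> K" by simp
  qed
  moreover have "\<forall>x\<in>K. \<bar>(x - a0) \<bullet> f n\<bar> \<le> 12^DIM('a) * r"
  proof
    fix x assume "x \<in> K"
    then have "\<bar>(x - a0) \<bullet> f n\<bar> \<le> h n" by (rule frame_coord_bound[OF fr nn])
    also have "h n = 12^DIM('a) * r" by (simp add: r_def n_def power_one_over)
    finally show "\<bar>(x - a0) \<bullet> f n\<bar> \<le> 12^DIM('a) * r" .
  qed
  ultimately show ?thesis using r un[OF nn] by blast
qed

lemma measure_lebesgue_ball:
  assumes r: "r \<ge> 0"
  shows "measure lebesgue (ball (c::'a::euclidean_space) r) = unit_ball_vol (DIM('a)) * r ^ DIM('a)"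
proof -
  have "measure lebesgue (ball c r) = measure lborel (ball c r)"
    by (rule measure_completion) simp
  then show ?thesis using content_ball[of r c] r by simp
qed

lemma cone_ball_subset:
  fixes K :: "'a::euclidean_space set"
  assumes conv: "convex K" and B: "cball g r \<subseteq> K" and p: "p \<in> K" and t: "0 \<le> t" "t < 1"
  shows "cball (g + t *\<^sub>R (p - g)) ((1 - t) * r) \<subseteq> K"
proof
  fix y assume y: "y \<in> cball (g + t *\<^sub>R (p - g)) ((1 - t) * r)"
  define z where "z = g + (1 / (1 - t)) *\<^sub>R (y - (g + t *\<^sub>R (p - g)))"
  have "norm (y - (g + t *\<^sub>R (p - g))) \<le> (1 - t) * r"
    using y by (simp add: dist_norm norm_minus_commute)
  then have "norm (z - g) \<le> r" using t by (simp add: z_def divide_simps mult.commute)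
  then have zK: "z \<in> K" using B by (simp add: subset_iff dist_norm norm_minus_commute)
  have "(1 - t) *\<^sub>R z = (1 - t) *\<^sub>R g + (y - (g + t *\<^sub>R (p - g)))"
    using t by (simp add: z_def scaleR_add_right)
  then have "y = (1 - t) *\<^sub>R z + t *\<^sub>R p"
    by (simp add: algebra_simps)
  then show "y \<in> K" using convexD[OF conv zK p, of "1 - t" t] t by simp
qed

lemma cone_volume:
  fixes K :: "'a::euclidean_space set"
  assumes conv: "convex K" and Km: "K \<in> lmeasurable" and B: "cball g r \<subseteq> K" and p: "p \<in> K" and r: "r > 0"
  shows "norm (p - g) / (2 * r) * (unit_ball_vol (DIM('a)) * (r/2) ^ DIM('a)) \<le> measure lebesgue K"
proof -
  define L where "L = norm (p - g)"
  define V where "V = unit_ball_vol (DIM('a)) * (r/2) ^ DIM('a)"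
  have V: "V \<ge> 0" by (simp add: V_def r less_imp_le)
  show ?thesis
  proof (cases "L = 0")
    case True
    then show ?thesis using measure_nonneg[of lebesgue K] by (simp add: L_def)
  next
    case False
    then have L: "L > 0" by (simp add: L_def)
    define N where "N = nat \<lfloor>L / (2*r)\<rfloor> + 1"
    have NL: "L / (2*r) \<le> real N" unfolding N_def using r L by linarith
    have NL2: "real (N - 1) \<le> L / (2*r)" unfolding N_def using r L by simp
    define c where "c i = g + (real i * r / L) *\<^sub>R (p - g)" for i :: nat
    define A where "A i = ball (c i) (r/2)" for i
    have tle: "real i * r / L \<le> 1/2" if "i \<in> {..<N}" for i
    proof -
      have "real i \<le> real (N - 1)" using that by auto
      then have "real i \<le> L / (2*r)" using NL2 by linarith
      then have "real i * (2*r) \<le> L" using pos_le_divide_eq[of "2*r" "real i" L] r by simp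
      then show ?thesis using r L by (simp add: field_simps)
    qed
    have AK: "A i \<subseteq> K" if "i \<in> {..<N}" for i
    proof -
      have t0: "0 \<le> real i * r / L" using r L by simp
      have "ball (c i) (r/2) \<subseteq> cball (c i) ((1 - real i * r / L) * r)"
      proof -
        have "(1/2) * r \<le> (1 - real i * r / L) * r"
          by (rule mult_right_mono) (use tle[OF that] r in auto)
        then have "r/2 \<le> (1 - real i * r / L) * r" by simp
        then show ?thesis using subset_cball ball_subset_cball by blast
      qed
      also have "\<dots> \<subseteq> K" unfolding c_def
        by (rule cone_ball_subset[OF conv B p t0]) (use tle[OF that] in linarith)
      finally show ?thesis by (simp add: A_def)
    qed
    have disj: "disjoint_family_on A {..<N}"
      unfolding disjoint_family_on_def
    proof (intro ballI impI)
      fix i j assume "i \<in> {..<N}" "j \<in> {..<N}" "i \<noteq> j"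
      have "c i - c j = ((real i - real j) * r / L) *\<^sub>R (p - g)"
        by (simp add: c_def algebra_simps diff_divide_distrib)
      then have "dist (c i) (c j) = \<bar>real i - real j\<bar> * r" using r L
        by (simp add: dist_norm abs_mult L_def)
      moreover have "\<bar>real i - real j\<bar> \<ge> 1" using \<open>i \<noteq> j\<close> by linarith
      ultimately have "dist (c i) (c j) \<ge> r/2 + r/2" using r by (simp add: mult_right_mono)
      then show "A i \<inter> A j = {}" unfolding A_def by (rule disjoint_ballI)
    qed
    have "measure lebesgue (\<Union>i\<in>{..<N}. A i) = (\<Sum>i\<in>{..<N}. measure lebesgue (A i))"
      apply (rule measure_finite_Union)
         apply simp
        apply (auto simp: A_def)[1]
       apply (rule disj)
      using emeasure_bounded_finite[of "A _"] by (simp add: A_def less_top)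
    also have "\<dots> = real N * V"
    proof -
      have mA: "measure lebesgue (A i) = V" for i
        unfolding A_def V_def by (rule measure_lebesgue_ball) (use r in simp)
      show ?thesis by (simp add: mA)
    qed
    finally have eq: "measure lebesgue (\<Union>i\<in>{..<N}. A i) = real N * V" .
    have "measure lebesgue (\<Union>i\<in>{..<N}. A i) \<le> measure lebesgue K"
      by (rule measure_mono_fmeasurable) (use AK Km in \<open>auto simp: A_def\<close>)
    moreover have "L / (2 * r) * V \<le> real N * V" by (rule mult_right_mono[OF NL V])
    ultimately show ?thesis using eq by (simp add: L_def V_def)
  qed
qed


definition psq :: "real \<Rightarrow> real" where "psq t = (max 0 t)^2"

lemma psq_deriv: "(psq has_real_derivative 2 * max 0 t) (at t)"
proof (cases "t = 0")
  case True
  have "((\<lambda>s. (psq (0 + s) - psq 0) / s) \<longlongrightarrow> 0) (at 0)"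
  proof (rule Lim_null_comparison)
    show "\<forall>\<^sub>F s in at 0. norm ((psq (0 + s) - psq 0) / s) \<le> \<bar>s\<bar>"
      by (auto simp: psq_def power2_eq_square abs_mult max_def)
    show "((\<lambda>s. \<bar>s\<bar>) \<longlongrightarrow> 0) (at (0::real))"
      by (intro tendsto_eq_intros) auto
  qed
  then show ?thesis using True by (simp add: DERIV_def)
next
  case False
  show ?thesis
  proof (cases "t > 0")
    case True
    have "((\<lambda>s. s^2) has_real_derivative 2 * t) (at t)"
      by (auto intro!: derivative_eq_intros)
    then have "((\<lambda>s. s^2) has_real_derivative 2 * max 0 t) (at t)" using True by simp
    then show ?thesis
      by (rule has_field_derivative_transform_within_open[where S="{0<..}"])
         (use True in \<open>auto simp: psq_def\<close>)
  next
    case f: False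
    with False have t: "t < 0" by simp
    have "((\<lambda>s. 0) has_real_derivative 2 * max 0 t) (at t)"
      using t by (auto intro!: derivative_eq_intros)
    then show ?thesis
      by (rule has_field_derivative_transform_within_open[where S="{..<0}"])
         (use t in \<open>auto simp: psq_def\<close>)
  qed
qed

lemma cos_ge_half: "\<bar>t::real\<bar> \<le> 1 \<Longrightarrow> cos t \<ge> 1/2"
proof -
  assume t: "\<bar>t\<bar> \<le> 1"
  have "cos t = 1 - 2 * sin (t/2) ^ 2" using cos_double_sin[of "t/2"] by (simp del: cos_double_sin)
  moreover have "\<bar>sin (t/2)\<bar> \<le> 1/2" using abs_sin_x_le_abs_x[of "t/2"] t by simp
  then have "\<bar>sin (t/2)\<bar> ^ 2 \<le> (1/2)^2" by (intro power_mono) auto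
  then have "sin (t/2) ^ 2 \<le> 1/4" by (simp add: power2_abs power2_eq_square[of "1/2::real"])
  ultimately show ?thesis by simp
qed

lemma psi_deriv:
  fixes c e :: "'a::euclidean_space" and h \<rho>2 :: real
  defines "N \<equiv> \<lambda>x. 1 - (x - c) \<bullet> (x - c) / \<rho>2"
  defines "G \<equiv> \<lambda>x. (psq (N x) * cos (((x - c) \<bullet> e) / h) / h) *\<^sub>R e +
                 (2 * max 0 (N x) * sin (((x - c) \<bullet> e) / h) * (-2 / \<rho>2)) *\<^sub>R (x - c)"
  assumes rho: "\<rho>2 \<noteq> 0" and hne: "h \<noteq> 0"
  shows "((\<lambda>x. psq (N x) * sin (((x - c) \<bullet> e) / h)) has_derivative (\<lambda>v. v \<bullet> G x)) (at x)"
proof -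
  have dN: "(N has_derivative (\<lambda>v. - (2 * ((x - c) \<bullet> v)) / \<rho>2)) (at x)"
    unfolding N_def
    using rho by (auto intro!: derivative_eq_intros simp: inner_commute field_simps)
  have dq: "((\<lambda>x. psq (N x)) has_derivative (\<lambda>v. - (2 * ((x - c) \<bullet> v)) / \<rho>2 * (2 * max 0 (N x)))) (at x)"
    by (rule DERIV_compose_FDERIV[OF psq_deriv dN])
  have ds: "((\<lambda>x. sin (((x - c) \<bullet> e) / h)) has_derivative (\<lambda>v. (v \<bullet> e) / h * cos (((x - c) \<bullet> e) / h))) (at x)"
    using hne by (auto intro!: derivative_eq_intros)
  have "((\<lambda>x. psq (N x) * sin (((x - c) \<bullet> e) / h)) has_derivative
      (\<lambda>v. psq (N x) * ((v \<bullet> e) / h * cos (((x - c) \<bullet> e) / h)) +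
            - (2 * ((x - c) \<bullet> v)) / \<rho>2 * (2 * max 0 (N x)) * sin (((x - c) \<bullet> e) / h))) (at x)"
    by (rule has_derivative_mult[OF dq ds])
  moreover have "(\<lambda>v. psq (N x) * ((v \<bullet> e) / h * cos (((x - c) \<bullet> e) / h)) +
            - (2 * ((x - c) \<bullet> v)) / \<rho>2 * (2 * max 0 (N x)) * sin (((x - c) \<bullet> e) / h)) = (\<lambda>v. v \<bullet> G x)"
    using rho hne by (intro ext) (simp add: G_def inner_add_right inner_diff_right inner_commute field_simps)
  ultimately show ?thesis by simp
qed


lemma set_integrable_cont_bounded:
  fixes f :: "'a::euclidean_space \<Rightarrow> real"
  assumes "continuous_on UNIV f" "bounded S" "S \<in> sets lebesgue"
  shows "set_integrable lebesgue S f"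
proof -
  obtain a where a: "S \<subseteq> cbox (-a) a" using bounded_subset_cbox_symmetric[OF assms(2)] by blast
  have "f absolutely_integrable_on cbox (-a) a"
    by (rule absolutely_integrable_continuous) (rule continuous_on_subset[OF assms(1)], simp)
  then show ?thesis by (rule set_integrable_subset) (use assms(3) a in auto)
qed

lemma perimeter_slab_lower:
  fixes \<Omega> :: "'a::euclidean_space set" and c e :: 'a
  assumes bdd: "bounded \<Omega>" and op: "open \<Omega>" and e: "norm e = 1" and h: "h > 0"
    and slab: "\<forall>x\<in>\<Omega>. \<bar>(x - c) \<bullet> e\<bar> \<le> h"
  shows "ereal (measure lebesgue \<Omega> / (4 * h)) \<le> perimeter \<Omega>"
proof -
  obtain \<delta>0 where \<delta>0: "\<forall>x\<in>\<Omega>. dist c x \<le> \<delta>0" using bdd unfolding bounded_any_center[of _ c] by blast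
  define \<delta> where "\<delta> = max 1 \<delta>0"
  have \<delta>: "\<delta> > 0" "\<And>x. x \<in> \<Omega> \<Longrightarrow> norm (x - c) \<le> \<delta>"
    using \<delta>0 by (auto simp: \<delta>_def dist_norm norm_minus_commute intro: le_max_iff_disj[THEN iffD2])
  define \<rho>2 where "\<rho>2 = 4 * \<delta>^2 + 128 * (\<delta> * h) + 1"
  have dh: "0 < \<delta> * h" using \<delta> h by simp
  have d2: "0 \<le> \<delta>^2" by simp
  have \<rho>2: "\<rho>2 > 0" "\<rho>2 \<ge> 4 * \<delta>^2" "\<rho>2 \<ge> 128 * (\<delta> * h)" using dh d2 unfolding \<rho>2_def by linarith+
  define N where "N = (\<lambda>x. 1 - (x - c) \<bullet> (x - c) / \<rho>2)"
  define G where "G = (\<lambda>x. (psq (N x) * cos (((x - c) \<bullet> e) / h) / h) *\<^sub>R e +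
                 (2 * max 0 (N x) * sin (((x - c) \<bullet> e) / h) * (-2 / \<rho>2)) *\<^sub>R (x - c))"
  define \<psi> where "\<psi> = (\<lambda>x. psq (N x) * sin (((x - c) \<bullet> e) / h))"
  define \<phi> where "\<phi> = (\<lambda>x. \<psi> x *\<^sub>R e)"
  define D\<phi> where "D\<phi> = (\<lambda>x. blinfun_scaleR_left e o\<^sub>L blinfun_inner_left (G x))"
  have Dapp: "blinfun_apply (D\<phi> x) = (\<lambda>v. (v \<bullet> G x) *\<^sub>R e)" for x
    by (rule ext) (simp add: D\<phi>_def)
  have dpsi: "(\<psi> has_derivative (\<lambda>v. v \<bullet> G x)) (at x)" for x
    unfolding \<psi>_def N_def G_def by (rule psi_deriv) (use \<rho>2 h in auto)
  have dphi: "(\<phi> has_derivative blinfun_apply (D\<phi> x)) (at x)" for x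
    unfolding Dapp \<phi>_def by (rule has_derivative_scaleR_left[OF dpsi])
  have contG: "continuous_on UNIV G"
    unfolding G_def N_def psq_def by (intro continuous_intros) (use \<rho>2 h in auto)
  have contD: "continuous_on UNIV D\<phi>"
    unfolding D\<phi>_def
    by (rule bounded_bilinear.continuous_on[OF bounded_bilinear_blinfun_compose continuous_on_const
          bounded_linear.continuous_on[OF bounded_linear_blinfun_inner_left contG]])
  have Nle: "N x \<le> 1" for x using \<rho>2 by (simp add: N_def)
  have psq_le: "psq (N x) \<le> 1" for x
  proof -
    have "max 0 (N x) \<le> 1" "0 \<le> max 0 (N x)" using Nle[of x] by auto
    then show ?thesis unfolding psq_def by (simp add: power_le_one)
  qed
  have psq_ge: "psq (N x) \<ge> 0" for x by (simp add: psq_def)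
  have normphi: "norm (\<phi> x) \<le> 1" for x
  proof -
    have "norm (\<phi> x) = \<bar>psq (N x)\<bar> * \<bar>sin (((x - c) \<bullet> e) / h)\<bar>"
      using e by (simp add: \<phi>_def \<psi>_def abs_mult)
    also have "\<dots> \<le> 1 * 1"
      by (intro mult_mono) (use psq_le psq_ge in auto)
    finally show ?thesis by simp
  qed
  have supp: "\<phi> x = 0" if "x \<notin> cball c (sqrt \<rho>2)" for x
  proof -
    have "sqrt \<rho>2 < norm (x - c)" using that by (simp add: dist_norm norm_minus_commute)
    then have "(sqrt \<rho>2)^2 < (norm (x - c))^2" using \<rho>2 by (intro power_strict_mono) auto
    then have "\<rho>2 < (x - c) \<bullet> (x - c)" using \<rho>2 by (simp add: power2_norm_eq_inner)
    then have "N x < 0" using \<rho>2 by (simp add: N_def)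
    then show ?thesis by (simp add: \<phi>_def \<psi>_def psq_def)
  qed
  have C1: "C1c_field UNIV \<phi> D\<phi>"
    unfolding C1c_field_def using dphi contD supp by (intro conjI allI exI[of _ "cball c (sqrt \<rho>2)"]) auto
  define divf where "divf = (\<lambda>x. \<Sum>b\<in>Basis. (blinfun_apply (D\<phi> x) b) \<bullet> b)"
  have divf: "divf x = G x \<bullet> e" for x
    unfolding divf_def Dapp by (subst euclidean_inner[of "G x" e]) (rule sum.cong, simp_all add: inner_commute)
  have divlow: "divf x \<ge> 1 / (4 * h)" if x: "x \<in> \<Omega>" for x
  proof -
    have nx: "norm (x - c) \<le> \<delta>" using \<delta>(2)[OF x] .
    have xx: "(x - c) \<bullet> (x - c) \<le> \<delta>^2"
      using nx by (simp add: power2_norm_eq_inner[symmetric] power_mono)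
    have "(x - c) \<bullet> (x - c) / \<rho>2 \<le> 1/4"
      using xx \<rho>2 by (simp add: divide_le_eq)
    then have N34: "N x \<ge> 3/4" by (simp add: N_def)
    then have mN: "max 0 (N x) = N x" by simp
    have psqN: "psq (N x) \<ge> 9/16"
    proof -
      have "(3/4::real)^2 \<le> (N x)^2" by (rule power_mono[OF N34]) simp
      then show ?thesis by (simp add: psq_def mN power2_eq_square)
    qed
    have arg: "\<bar>((x - c) \<bullet> e) / h\<bar> \<le> 1" using slab x h by (simp add: abs_div divide_le_eq)
    have cs: "cos (((x - c) \<bullet> e) / h) \<ge> 1/2" by (rule cos_ge_half[OF arg])
    have t1: "psq (N x) * cos (((x - c) \<bullet> e) / h) / h \<ge> 9 / (32 * h)"
    proof -
      have "9/16 * (1/2) \<le> psq (N x) * cos (((x - c) \<bullet> e) / h)"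
        by (rule mult_mono[OF psqN cs]) (use psq_ge in auto)
      then show ?thesis using h by (simp add: divide_simps)
    qed
    have xe: "\<bar>(x - c) \<bullet> e\<bar> \<le> \<delta>"
      using Cauchy_Schwarz_ineq2[of "x - c" e] e nx by simp
    have t2: "\<bar>2 * max 0 (N x) * sin (((x - c) \<bullet> e) / h) * (-2 / \<rho>2) * ((x - c) \<bullet> e)\<bar> \<le> 1 / (32 * h)"
    proof -
      have "\<bar>2 * max 0 (N x) * sin (((x - c) \<bullet> e) / h) * (-2 / \<rho>2) * ((x - c) \<bullet> e)\<bar>
            = 4 * \<bar>N x\<bar> * \<bar>sin (((x - c) \<bullet> e) / h)\<bar> * \<bar>(x - c) \<bullet> e\<bar> / \<rho>2"
        using \<rho>2 by (simp add: mN abs_mult abs_div)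
      also have "\<dots> \<le> 4 * 1 * 1 * \<delta> / \<rho>2"
        using Nle[of x] N34 xe \<rho>2
        by (intro divide_right_mono mult_mono) auto
      also have "\<dots> \<le> 1 / (32 * h)"
        using \<rho>2 \<delta> h by (simp add: divide_simps)
      finally show ?thesis .
    qed
    have "G x \<bullet> e = psq (N x) * cos (((x - c) \<bullet> e) / h) / h +
        2 * max 0 (N x) * sin (((x - c) \<bullet> e) / h) * (-2 / \<rho>2) * ((x - c) \<bullet> e)"
    proof -
      have ee: "e \<bullet> e = 1" using e by (simp add: dot_square_norm)
      show ?thesis by (simp add: G_def inner_add_left inner_diff_left ee)
    qed
    then have "G x \<bullet> e \<ge> 9 / (32 * h) - 1 / (32 * h)" using t1 t2 by linarith
    moreover have "9 / (32 * h) - 1 / (32 * h) = 1 / (4 * h)" using h by (simp add: divide_simps)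
    ultimately show ?thesis by (simp add: divf)
  qed
  have \<Omega>m: "\<Omega> \<in> sets lebesgue" using op by simp
  have \<Omega>fin: "emeasure lebesgue \<Omega> \<noteq> \<infinity>"
    using bounded_set_imp_lmeasurable[OF bdd \<Omega>m] unfolding fmeasurable_def by (auto simp del: emeasure_completion)
  have contdiv: "continuous_on UNIV divf"
    unfolding divf by (intro continuous_intros contG continuous_on_const)
  have eqc: "set_lebesgue_integral lebesgue \<Omega> (\<lambda>_. 1 / (4 * h)) = measure lebesgue \<Omega> * (1 / (4 * h))"
    using set_integral_const[OF \<Omega>m \<Omega>fin, of "1 / (4*h)"] by (simp only: real_scaleR_def)
  have "measure lebesgue \<Omega> / (4 * h) = measure lebesgue \<Omega> * (1 / (4 * h))" by simp
  also have "\<dots> = set_lebesgue_integral lebesgue \<Omega> (\<lambda>_. 1 / (4 * h))" by (rule eqc[symmetric])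
  also have "\<dots> \<le> set_lebesgue_integral lebesgue \<Omega> divf"
    by (rule set_integral_mono)
       (use set_integrable_cont_bounded[OF _ bdd \<Omega>m] contdiv divlow in auto)
  finally have le: "measure lebesgue \<Omega> / (4 * h) \<le> set_lebesgue_integral lebesgue \<Omega> divf" .
  have mem: "(\<phi>, D\<phi>) \<in> {(\<phi>, D\<phi>). C1c_field UNIV \<phi> D\<phi> \<and> (\<forall>x. norm (\<phi> x) \<le> 1)}"
    using C1 normphi by simp
  show ?thesis
    unfolding perimeter_def
    by (rule SUP_upper2[OF mem]) (use le in \<open>simp add: divf_def\<close>)
qed


lemma pow_diff_le:
  fixes x y :: real
  assumes "0 \<le> y" "y \<le> x"
  shows "x^(Suc n) - y^(Suc n) \<le> real (Suc n) * (x - y) * x^n"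
proof (induction n)
  case 0
  then show ?case by simp
next
  case (Suc n)
  have x0: "0 \<le> x" using assms by linarith
  have yx: "y^(Suc n) \<le> x^(Suc n)" by (rule power_mono) (use assms in auto)
  have eq: "x^(Suc (Suc n)) - y^(Suc (Suc n)) = x * (x^(Suc n) - y^(Suc n)) + (x - y) * y^(Suc n)"
    by (simp add: algebra_simps)
  have "x * (x^(Suc n) - y^(Suc n)) \<le> x * (real (Suc n) * (x - y) * x^n)"
    by (rule mult_left_mono[OF Suc x0])
  moreover have "(x - y) * y^(Suc n) \<le> (x - y) * x^(Suc n)"
    by (rule mult_left_mono[OF yx]) (use assms in auto)
  ultimately have "x^(Suc (Suc n)) - y^(Suc (Suc n)) \<le> x * (real (Suc n) * (x - y) * x^n) + (x - y) * x^(Suc n)"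
    unfolding eq by linarith
  also have "\<dots> = real (Suc (Suc n)) * (x - y) * x^(Suc n)"
    by (simp add: algebra_simps)
  finally show ?case .
qed

lemma lborel_translate_integral:
  fixes f :: "'a::euclidean_space \<Rightarrow> real"
  assumes f: "f \<in> borel_measurable borel"
  shows "integral\<^sup>L lborel (\<lambda>x. f (a + x)) = integral\<^sup>L lborel f"
proof -
  have eq: "distr lborel borel (\<lambda>x. a + x) = lborel"
    using lborel_affine[of 1 a] by (simp add: density_1)
  have "integral\<^sup>L lborel (\<lambda>x. f (a + x)) = integral\<^sup>L (distr lborel borel (\<lambda>x. a + x)) f"
    by (rule integral_distr[symmetric]) (use f in auto)
  also have "\<dots> = integral\<^sup>L lborel f" by (simp only: eq)
  finally show ?thesis .
qed

lemma dir_deriv_limit: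
  fixes \<phi> :: "'a::euclidean_space \<Rightarrow> 'a"
  assumes d: "(\<phi> has_derivative blinfun_apply D) (at x)"
  shows "((\<lambda>n. (\<phi> (x + inverse (real (Suc n)) *\<^sub>R b) \<bullet> b - \<phi> x \<bullet> b) / inverse (real (Suc n)))
          \<longlongrightarrow> (blinfun_apply D b) \<bullet> b) sequentially"
proof -
  define F where "F = (\<lambda>s::real. \<phi> (x + s *\<^sub>R b) \<bullet> b)"
  have dl: "((\<lambda>s::real. x + s *\<^sub>R b) has_derivative (\<lambda>s. s *\<^sub>R b)) (at 0)"
    by (auto intro!: derivative_eq_intros)
  have d0: "(\<phi> has_derivative blinfun_apply D) (at (x + 0 *\<^sub>R b))" using d by simp
  have "((\<lambda>s. \<phi> (x + s *\<^sub>R b)) has_derivative (\<lambda>s. blinfun_apply D (s *\<^sub>R b))) (at 0)"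
    by (rule has_derivative_compose[OF dl d0])
  then have "(F has_derivative (\<lambda>s. blinfun_apply D (s *\<^sub>R b) \<bullet> b)) (at 0)"
    unfolding F_def by (intro has_derivative_inner_left)
  moreover have "(\<lambda>s. blinfun_apply D (s *\<^sub>R b) \<bullet> b) = (*) (blinfun_apply D b \<bullet> b)"
    by (rule ext) (simp add: blinfun.scaleR_right)
  ultimately have "(F has_field_derivative (blinfun_apply D b \<bullet> b)) (at 0)"
    by (simp add: has_field_derivative_def)
  then have lim: "((\<lambda>h. (F (0 + h) - F 0) / h) \<longlongrightarrow> blinfun_apply D b \<bullet> b) (at 0)"
    by (simp add: DERIV_def)
  have seq: "filterlim (\<lambda>n. inverse (real (Suc n))) (at 0) sequentially"
    unfolding filterlim_at using LIMSEQ_inverse_real_of_nat by auto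
  have "((\<lambda>n. (F (0 + inverse (real (Suc n))) - F 0) / inverse (real (Suc n))) \<longlongrightarrow> blinfun_apply D b \<bullet> b) sequentially"
    by (rule filterlim_compose[OF lim seq])
  then show ?thesis by (simp add: F_def)
qed


lemma deriv_integral_bound:
  fixes \<phi> :: "'a::euclidean_space \<Rightarrow> 'a" and D\<phi> :: "'a \<Rightarrow> 'a \<Rightarrow>\<^sub>L 'a" and b :: 'a and R :: real
  assumes C1: "C1c_field UNIV \<phi> D\<phi>" and n\<phi>: "\<forall>x. norm (\<phi> x) \<le> 1" and b: "b \<in> Basis" and R: "R > 0"
  shows "set_lebesgue_integral lebesgue (ball 0 R) (\<lambda>x. (blinfun_apply (D\<phi> x) b) \<bullet> b)
           \<le> 2 * real DIM('a) * unit_ball_vol (DIM('a)) * (R+1)^(DIM('a) - 1)"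
proof -
  define d where "d = DIM('a)"
  define \<omega> where "\<omega> = unit_ball_vol (real d)"
  have \<omega>: "\<omega> \<ge> 0" by (simp add: \<omega>_def)
  define B where "B = ball (0::'a) R"
  define C where "C = cball (0::'a) (R+1)"
  have d\<phi>: "\<And>x. (\<phi> has_derivative blinfun_apply (D\<phi> x)) (at x)" and contD: "continuous_on UNIV D\<phi>"
    using C1 by (auto simp: C1c_field_def)
  have cont\<phi>: "continuous_on UNIV \<phi>"
    using d\<phi> has_derivative_continuous continuous_at_imp_continuous_on by blast
  define f where "f = (\<lambda>x. \<phi> x \<bullet> b)"
  define g where "g = (\<lambda>x. blinfun_apply (D\<phi> x) b \<bullet> b)"
  have contf: "continuous_on UNIV f" unfolding f_def by (intro continuous_intros cont\<phi>)
  have contg: "continuous_on UNIV g" unfolding g_def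
    by (intro continuous_intros bounded_bilinear.continuous_on[OF bounded_bilinear_blinfun_apply contD continuous_on_const])
  have fm[measurable]: "f \<in> borel_measurable borel" by (rule borel_measurable_continuous_onI[OF contf])
  have gm[measurable]: "g \<in> borel_measurable borel" by (rule borel_measurable_continuous_onI[OF contg])
  have nb: "norm b = 1" using b by simp
  have fb: "\<bar>f x\<bar> \<le> 1" for x
  proof -
    have "\<bar>f x\<bar> \<le> norm (\<phi> x) * norm b" unfolding f_def by (rule Cauchy_Schwarz_ineq2)
    then show ?thesis using n\<phi> nb by (metis mult.right_neutral order_trans)
  qed
  obtain Bd where Bd: "Bd > 0" "\<And>y. y \<in> C \<Longrightarrow> norm (D\<phi> y) \<le> Bd"
  proof -
    have "compact (D\<phi> ` C)" unfolding C_def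
      by (rule compact_continuous_image[OF continuous_on_subset[OF contD]]) auto
    then have "bounded (D\<phi> ` C)" by (rule compact_imp_bounded)
    then obtain Bd where "Bd > 0" "\<forall>z\<in>D\<phi> ` C. norm z \<le> Bd" unfolding bounded_pos by blast
    then show ?thesis using that by auto
  qed
  define t where "t n = inverse (real (Suc n))" for n
  have t: "0 < t n" "t n \<le> 1" for n
    by (auto simp: t_def inverse_le_1_iff)
  have Bs[measurable]: "B \<in> sets borel" by (simp add: B_def)
  define F where "F n x = indicator B x * ((f (x + t n *\<^sub>R b) - f x) / t n)" for n x
  have Fm[measurable]: "F n \<in> borel_measurable lborel" for n
    unfolding F_def by measurable
  have Bfin: "emeasure lborel B < \<infinity>" unfolding B_def by (rule emeasure_bounded_finite) simp
  have intB: "integrable lborel (indicator B :: 'a \<Rightarrow> real)"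
    by (rule integrable_real_indicator) (use Bfin in auto)
  have lim: "(\<lambda>n. integral\<^sup>L lborel (F n)) \<longlonglongrightarrow> integral\<^sup>L lborel (\<lambda>x. indicator B x * g x)"
  proof (rule integral_dominated_convergence[where w="\<lambda>x. indicator B x * Bd"])
    show "(\<lambda>x. indicator B x * g x) \<in> borel_measurable lborel" by measurable
    show "\<And>n. F n \<in> borel_measurable lborel" by (rule Fm)
    show "integrable lborel (\<lambda>x. indicator B x * Bd)" using intB by (rule integrable_mult_left)
    show "AE x in lborel. (\<lambda>n. F n x) \<longlonglongrightarrow> indicator B x * g x"
    proof (rule AE_I2)
      fix x :: 'a
      show "(\<lambda>n. F n x) \<longlonglongrightarrow> indicator B x * g x"
      proof (cases "x \<in> B")
        case True
        have "(\<lambda>n. (f (x + t n *\<^sub>R b) - f x) / t n) \<longlonglongrightarrow> g x"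
          unfolding f_def g_def t_def by (rule dir_deriv_limit[OF d\<phi>])
        then show ?thesis using True by (simp add: F_def)
      next
        case False
        then show ?thesis by (simp add: F_def)
      qed
    qed
    show "AE x in lborel. norm (F n x) \<le> indicator B x * Bd" for n
    proof (rule AE_I2)
      fix x :: 'a
      show "norm (F n x) \<le> indicator B x * Bd"
      proof (cases "x \<in> B")
        case False
        then show ?thesis by (simp add: F_def)
      next
        case True
        have xC: "x \<in> C" using True by (simp add: B_def C_def)
        have "norm (x + t n *\<^sub>R b) \<le> norm x + t n" using t[of n] nb
          by (metis norm_triangle_ineq norm_scaleR abs_of_pos mult.right_neutral)
        then have xtC: "x + t n *\<^sub>R b \<in> C" using True t[of n] by (simp add: B_def C_def)
        have "norm (\<phi> (x + t n *\<^sub>R b) - \<phi> x) \<le> Bd * norm (x + t n *\<^sub>R b - x)"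
        proof (rule differentiable_bound[where f' = "\<lambda>y. blinfun_apply (D\<phi> y)"])
          show "convex C" by (simp add: C_def)
          show "(\<phi> has_derivative blinfun_apply (D\<phi> y)) (at y within C)" if "y \<in> C" for y
            using d\<phi>[of y] by (rule has_derivative_at_withinI)
          show "onorm (blinfun_apply (D\<phi> y)) \<le> Bd" if "y \<in> C" for y
            using Bd(2)[OF that] by (simp add: norm_blinfun.rep_eq)
        qed (use xC xtC in auto)
        then have n1: "norm (\<phi> (x + t n *\<^sub>R b) - \<phi> x) \<le> Bd * t n" using t[of n] nb by simp
        have "\<bar>f (x + t n *\<^sub>R b) - f x\<bar> \<le> norm (\<phi> (x + t n *\<^sub>R b) - \<phi> x) * norm b"
          unfolding f_def inner_diff_left[symmetric] by (rule Cauchy_Schwarz_ineq2)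
        then have "\<bar>f (x + t n *\<^sub>R b) - f x\<bar> \<le> Bd * t n" using n1 nb by simp
        then have "\<bar>(f (x + t n *\<^sub>R b) - f x) / t n\<bar> \<le> Bd" using t[of n]
          by (simp add: abs_div pos_divide_le_eq)
        then show ?thesis using True by (simp add: F_def)
      qed
    qed
  qed
  obtain N0 where N0: "inverse (real (Suc N0)) < R" using reals_Archimedean[OF R] by auto
  have Cfin: "emeasure lborel C < \<infinity>" unfolding C_def by (rule emeasure_bounded_finite) simp
  have Cs[measurable]: "C \<in> sets borel" by (simp add: C_def)
  define bound where "bound = 2 * real d * \<omega> * (R+1)^(d - 1)"
  have nbound: "integral\<^sup>L lborel (F n) \<le> bound" if n: "n \<ge> N0" for n
  proof -
    define tt where "tt = t n"
    have tt: "0 < tt" "tt \<le> 1" "tt < R"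
    proof -
      show "0 < tt" "tt \<le> 1" using t by (auto simp: tt_def)
      have tn: "t n \<le> t N0" unfolding t_def by (rule le_imp_inverse_le) (use n in auto)
      show "tt < R" using tn N0 unfolding tt_def t_def by linarith
    qed
    define I1 where "I1 x = indicator B x * f (x + tt *\<^sub>R b)" for x
    define I2 where "I2 x = indicator B x * f x" for x
    define H where "H y = indicator B (y - tt *\<^sub>R b) * f y" for y
    have ntb: "norm (tt *\<^sub>R b) = tt" using tt nb by simp
    have intg: "integrable lborel k" if km: "k \<in> borel_measurable lborel"
      and kb: "\<And>x. \<bar>k x\<bar> \<le> 1" and kz: "\<And>x. x \<notin> C \<Longrightarrow> k x = 0" for k :: "'a \<Rightarrow> real"
      by (rule integrableI_bounded_set[where A=C and B=1]) (use km kb kz Cfin in auto)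
    have indb: "\<bar>indicator S x * f y\<bar> \<le> 1" for S x y
      using fb[of y] by (auto simp: indicator_def)
    have i1: "integrable lborel I1"
    proof (rule intg)
      show "I1 \<in> borel_measurable lborel" unfolding I1_def by measurable
      show "\<bar>I1 x\<bar> \<le> 1" for x unfolding I1_def by (rule indb)
      show "I1 x = 0" if "x \<notin> C" for x using that R by (auto simp: I1_def B_def C_def)
    qed
    have i2: "integrable lborel I2"
    proof (rule intg)
      show "I2 \<in> borel_measurable lborel" unfolding I2_def by measurable
      show "\<bar>I2 x\<bar> \<le> 1" for x unfolding I2_def by (rule indb)
      show "I2 x = 0" if "x \<notin> C" for x using that R by (auto simp: I2_def B_def C_def)
    qed
    have iH: "integrable lborel H"
    proof (rule intg)
      show "H \<in> borel_measurable lborel" unfolding H_def by measurable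
      show "\<bar>H x\<bar> \<le> 1" for x unfolding H_def by (rule indb)
      show "H x = 0" if "x \<notin> C" for x
      proof (rule ccontr)
        assume "H x \<noteq> 0"
        then have "x - tt *\<^sub>R b \<in> B" by (auto simp: H_def indicator_def split: if_splits)
        then have "norm (x - tt *\<^sub>R b) < R" by (simp add: B_def)
        moreover have "norm x \<le> norm (x - tt *\<^sub>R b) + norm (tt *\<^sub>R b)"
          by (metis norm_triangle_sub add.commute)
        ultimately have "norm x < R + 1" using ntb tt by linarith
        then show False using that by (simp add: C_def)
      qed
    qed
    have Feq: "F n x = (I1 x - I2 x) / tt" for x
      by (simp add: F_def I1_def I2_def tt_def diff_divide_distrib[symmetric] algebra_simps)
    have "integral\<^sup>L lborel (F n) = (integral\<^sup>L lborel I1 - integral\<^sup>L lborel I2) / tt"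
    proof -
      have "F n = (\<lambda>x. (I1 x - I2 x) / tt)" by (rule ext) (rule Feq)
      then show ?thesis using i1 i2 by simp
    qed
    moreover have "integral\<^sup>L lborel I1 = integral\<^sup>L lborel H"
    proof -
      have "I1 = (\<lambda>x. H (tt *\<^sub>R b + x))" by (rule ext) (simp add: I1_def H_def add.commute)
      moreover have "H \<in> borel_measurable borel" unfolding H_def by measurable
      ultimately show ?thesis using lborel_translate_integral[of H "tt *\<^sub>R b"] by simp
    qed
    ultimately have eqF: "integral\<^sup>L lborel (F n) = integral\<^sup>L lborel (\<lambda>x. H x - I2 x) / tt"
      using iH i2 by simp
    define A where "A = ball (0::'a) (R + tt) - ball 0 (R - tt)"
    have As[measurable]: "A \<in> sets borel" by (simp add: A_def)
    have Afin: "emeasure lborel A < \<infinity>"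
      by (rule emeasure_bounded_finite, rule bounded_subset[OF bounded_ball[of 0 "R + tt"]]) (auto simp: A_def)
    have iA: "integrable lborel (indicator A :: 'a \<Rightarrow> real)"
      by (rule integrable_real_indicator) (use Afin in auto)
    have pw: "H x - I2 x \<le> indicator A x" for x
    proof -
      have tri1: "norm x \<le> norm (x - tt *\<^sub>R b) + tt" using norm_triangle_sub[of x "tt *\<^sub>R b"] ntb by simp
      have tri2: "norm (x - tt *\<^sub>R b) \<le> norm x + tt" using norm_triangle_ineq4[of x "tt *\<^sub>R b"] ntb by simp
      show ?thesis
      proof (cases "x - tt *\<^sub>R b \<in> B"; cases "x \<in> B")
        assume a1: "x - tt *\<^sub>R b \<in> B" and a2: "x \<notin> B"
        then have "x \<in> A" using tri1 tt by (auto simp: A_def B_def)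
        then show ?thesis using a1 a2 fb[of x] by (simp add: H_def I2_def)
      next
        assume a1: "x - tt *\<^sub>R b \<notin> B" and a2: "x \<in> B"
        then have "x \<in> A" using tri2 tt by (auto simp: A_def B_def)
        then show ?thesis using a1 a2 fb[of x] by (simp add: H_def I2_def)
      qed (auto simp: H_def I2_def indicator_def)
    qed
    have "integral\<^sup>L lborel (\<lambda>x. H x - I2 x) \<le> integral\<^sup>L lborel (indicator A)"
      by (rule integral_mono) (use iH i2 iA pw in auto)
    also have "\<dots> = measure lborel A" by simp
    also have "\<dots> = \<omega> * ((R + tt)^d - (R - tt)^d)"
    proof -
      have "measure lborel A = measure lborel (ball (0::'a) (R + tt)) - measure lborel (ball (0::'a) (R - tt))"
        unfolding A_def
        by (rule measure_Diff) (use tt emeasure_bounded_finite[of "ball (0::'a) (R + tt)"] in \<open>auto simp: less_top\<close>)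
      also have "\<dots> = \<omega> * (R + tt)^d - \<omega> * (R - tt)^d"
        using content_ball[of "R + tt" "0::'a"] content_ball[of "R - tt" "0::'a"] tt R
        by (simp add: \<omega>_def d_def)
      finally show ?thesis by (simp add: algebra_simps)
    qed
    also have "\<dots> \<le> \<omega> * (real d * (2 * tt) * (R + 1)^(d - 1))"
    proof (rule mult_left_mono[OF _ \<omega>])
      obtain m where dm: "d = Suc m" using DIM_positive[where 'a='a] unfolding d_def using not0_implies_Suc by blast
      have "(R + tt)^d - (R - tt)^d \<le> real d * ((R + tt) - (R - tt)) * (R + tt)^(d - 1)"
        unfolding dm using pow_diff_le[of "R - tt" "R + tt" m] tt by simp
      also have "\<dots> = real d * (2 * tt) * (R + tt)^(d - 1)" by simp
      also have "\<dots> \<le> real d * (2 * tt) * (R + 1)^(d - 1)"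
        by (intro mult_left_mono power_mono) (use tt R in auto)
      finally show "(R + tt)^d - (R - tt)^d \<le> real d * (2 * tt) * (R + 1)^(d - 1)" .
    qed
    finally have "integral\<^sup>L lborel (\<lambda>x. H x - I2 x) \<le> \<omega> * (real d * (2 * tt) * (R + 1)^(d - 1))" .
    then have "integral\<^sup>L lborel (\<lambda>x. H x - I2 x) / tt \<le> \<omega> * (real d * (2 * tt) * (R + 1)^(d - 1)) / tt"
      by (rule divide_right_mono) (use tt in auto)
    also have "\<dots> = bound" using tt by (simp add: bound_def field_simps)
    finally show ?thesis using eqF by simp
  qed
  have "integral\<^sup>L lborel (\<lambda>x. indicator B x * g x) \<le> bound"
    by (rule LIMSEQ_le_const2[OF lim]) (use nbound in blast)
  moreover have "set_lebesgue_integral lebesgue B g = integral\<^sup>L lborel (\<lambda>x. indicator B x * g x)"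
    unfolding set_lebesgue_integral_def by (simp add: integral_completion)
  ultimately show ?thesis by (simp add: B_def g_def bound_def d_def \<omega>_def)
qed

lemma perimeter_ball_le:
  assumes R: "R > 0"
  shows "perimeter (ball (0::'a::euclidean_space) R)
     \<le> ereal (real DIM('a) * (2 * real DIM('a) * unit_ball_vol (DIM('a)) * (R+1)^(DIM('a) - 1)))"
  unfolding perimeter_def
proof (rule SUP_least)
  fix p :: "('a \<Rightarrow> 'a) \<times> ('a \<Rightarrow> 'a \<Rightarrow>\<^sub>L 'a)"
  assume "p \<in> {(\<phi>, D\<phi>). C1c_field UNIV \<phi> D\<phi> \<and> (\<forall>x. norm (\<phi> x) \<le> (1::real))}"
  then obtain \<phi> D\<phi> where p: "p = (\<phi>, D\<phi>)" and C1: "C1c_field UNIV \<phi> D\<phi>"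
    and n\<phi>: "\<forall>x. norm (\<phi> x) \<le> 1" by auto
  define B where "B = ball (0::'a) R"
  define M0 where "M0 = 2 * real DIM('a) * unit_ball_vol (DIM('a)) * (R+1)^(DIM('a) - 1)"
  have contD: "continuous_on UNIV D\<phi>" using C1 by (simp add: C1c_field_def)
  have si: "set_integrable lebesgue B (\<lambda>x. blinfun_apply (D\<phi> x) b \<bullet> b)" for b
  proof (rule set_integrable_cont_bounded)
    show "continuous_on UNIV (\<lambda>x. blinfun_apply (D\<phi> x) b \<bullet> b)"
      by (intro continuous_intros bounded_bilinear.continuous_on[OF bounded_bilinear_blinfun_apply contD continuous_on_const])
  qed (auto simp: B_def)
  have "set_lebesgue_integral lebesgue B (\<lambda>x. \<Sum>b\<in>Basis. blinfun_apply (D\<phi> x) b \<bullet> b)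
      = (\<Sum>b\<in>Basis. set_lebesgue_integral lebesgue B (\<lambda>x. blinfun_apply (D\<phi> x) b \<bullet> b))"
    unfolding set_lebesgue_integral_def
    apply (subst scaleR_sum_right)
    apply (rule Bochner_Integration.integral_sum[where f="\<lambda>b x. indicator B x *\<^sub>R (blinfun_apply (D\<phi> x) b \<bullet> b)"])
    using si unfolding set_integrable_def by blast
  also have "\<dots> \<le> of_nat (card (Basis :: 'a set)) * M0"
    by (rule sum_bounded_above) (use deriv_integral_bound[OF C1 n\<phi> _ R] in \<open>auto simp: B_def M0_def\<close>)
  finally have "set_lebesgue_integral lebesgue B (\<lambda>x. \<Sum>b\<in>Basis. blinfun_apply (D\<phi> x) b \<bullet> b) \<le> real DIM('a) * M0"
    by simp
  then show "(case p of (\<phi>, D\<phi>) \<Rightarrow> ereal (set_lebesgue_integral lebesgue (ball 0 R) (\<lambda>x. \<Sum>b\<in>Basis. blinfun_apply (D\<phi> x) b \<bullet> b)))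
      \<le> ereal (real DIM('a) * (2 * real DIM('a) * unit_ball_vol (DIM('a)) * (R+1)^(DIM('a) - 1)))"
    by (simp add: p B_def M0_def)
qed


lemma final_arith:
  fixes D r Mb V0 \<omega> m :: real and d :: nat
  assumes d: "d \<ge> 2" and r: "r > 0" and \<omega>: "\<omega> > 0" and V0: "V0 > 0" and D: "D \<ge> 0"
    and m1: "V0 \<le> m" and m2: "m \<le> 4 * (12^d * r) * Mb"
    and m3: "(D/2) / (2*r) * (\<omega> * (r/2)^d) \<le> m"
  shows "D \<le> 16 * 24^d * Mb / (\<omega> * (V0 / (4 * 12^d * Mb))^(d - 2))"
proof -
  have Mb: "Mb > 0"
  proof (rule ccontr)
    assume "\<not> ?thesis"
    then have "4 * (12^d * r) * Mb \<le> 0" using r by (simp add: mult_nonneg_nonpos)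
    then show False using m1 m2 V0 by linarith
  qed
  define r0 where "r0 = V0 / (4 * 12^d * Mb)"
  have r0: "r0 > 0" using V0 Mb by (simp add: r0_def)
  have rr0: "r0 \<le> r"
  proof -
    have "V0 \<le> (4 * 12^d * Mb) * r" using m1 m2 by (simp add: algebra_simps)
    then show ?thesis unfolding r0_def using Mb by (simp add: divide_le_eq mult.commute)
  qed
  obtain k where k: "d = k + 2" using d by (metis le_add_diff_inverse2)
  have dk: "d - 2 = k" using k by simp
  have p1: "(r/2)^d = r^k * r * r / 2^d" using k by (simp add: power_add power_divide algebra_simps)
  have "(D/2) / (2*r) * (\<omega> * (r^k * r * r / 2^d)) \<le> 4 * (12^d * r) * Mb"
    using m2 m3 p1 by simp
  then have "D * \<omega> * r^k * r / (4 * 2^d) \<le> 4 * (12^d * r) * Mb"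
    using r by (simp add: field_simps)
  then have "D * \<omega> * r^k * r \<le> 4 * (12^d * r) * Mb * (4 * 2^d)"
    by (simp add: divide_le_eq)
  then have "(D * \<omega> * r^k) * r \<le> (16 * 24^d * Mb) * r"
    by (simp add: algebra_simps power_mult_distrib[symmetric])
  then have A: "D * \<omega> * r^k \<le> 16 * 24^d * Mb" using r by simp
  have rk: "r0^k \<le> r^k" by (rule power_mono[OF rr0]) (use r0 in auto)
  have r0k: "r0^k > 0" using r0 by simp
  have "D * (\<omega> * r0^k) \<le> D * (\<omega> * r^k)"
    by (intro mult_left_mono rk D) (use \<omega> in auto)
  also have "\<dots> \<le> 16 * 24^d * Mb" using A by (simp add: algebra_simps)
  finally have "D * (\<omega> * r0^k) \<le> 16 * 24^d * Mb" .
  then show ?thesis unfolding dk r0_def[symmetric] using \<omega> r0k by (simp add: le_divide_eq)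
qed

lemma annulus_pos:
  fixes R1 R2 :: real
  assumes "0 < R1" "R1 < R2"
  shows "measure lebesgue (ball (0::'a::euclidean_space) R2 - cball 0 R1) > 0"
proof -
  obtain b0 :: 'a where b0: "b0 \<in> Basis" using nonempty_Basis by blast
  define z where "z = ((R1 + R2) / 2) *\<^sub>R b0"
  define \<rho> where "\<rho> = (R2 - R1) / 2"
  have \<rho>: "\<rho> > 0" using assms by (simp add: \<rho>_def)
  have nz: "norm z = (R1 + R2) / 2" using b0 assms by (simp add: z_def)
  have sub: "ball z \<rho> \<subseteq> ball 0 R2 - cball 0 R1"
  proof
    fix y assume "y \<in> ball z \<rho>"
    then have yz: "norm (y - z) < \<rho>" by (simp add: dist_norm norm_minus_commute)
    have "norm y \<le> norm z + norm (y - z)" by (metis norm_triangle_sub add.commute)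
    moreover have "norm z \<le> norm y + norm (y - z)" by (metis norm_triangle_sub norm_minus_commute add.commute)
    ultimately have a: "norm y \<le> norm z + norm (y - z)" "norm z \<le> norm y + norm (y - z)" by auto
    have l1: "\<And>a b c::real. a \<le> c + b \<Longrightarrow> b < (R2 - R1) / 2 \<Longrightarrow> c = (R1 + R2) / 2 \<Longrightarrow> a < R2"
      by (simp add: field_simps)
    have l2: "\<And>a b c::real. c \<le> a + b \<Longrightarrow> b < (R2 - R1) / 2 \<Longrightarrow> c = (R1 + R2) / 2 \<Longrightarrow> R1 < a"
      by (simp add: field_simps)
    have "norm y < R2" by (rule l1[OF a(1) yz[unfolded \<rho>_def] nz])
    moreover have "norm y > R1" by (rule l2[OF a(2) yz[unfolded \<rho>_def] nz])
    ultimately show "y \<in> ball 0 R2 - cball 0 R1" by simp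
  qed
  have "measure lebesgue (ball z \<rho>) \<le> measure lebesgue (ball (0::'a) R2 - cball 0 R1)"
  proof (rule measure_mono_fmeasurable[OF sub])
    have bd: "bounded (ball (0::'a) R2 - cball 0 R1)" by (rule bounded_subset[OF bounded_ball]) auto
    show "ball (0::'a) R2 - cball 0 R1 \<in> fmeasurable lebesgue"
      by (rule bounded_set_imp_lmeasurable[OF bd]) simp
  qed simp
  moreover have "measure lebesgue (ball z \<rho>) > 0"
    using measure_lebesgue_ball[of \<rho> z] \<rho> by simp
  ultimately show ?thesis by linarith
qed

theorem mainTheorem11:
  fixes p q R1 R2 :: real
  assumes "DIM('a::euclidean_space) \<ge> 2"
    and "1 < p" and "1 \<le> q" and "q \<le> p"
    and "0 < R1" and "R1 < R2"
  shows "\<exists>C>0. \<forall>(\<Omega>0::'a set) \<Theta>.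
           bounded \<Omega>0 \<and> open \<Omega>0 \<and> convex \<Omega>0 \<and>
           bounded \<Theta> \<and> open \<Theta> \<and> convex \<Theta> \<and> closure \<Theta> \<subseteq> \<Omega>0 \<and>
           perimeter \<Omega>0 = perimeter (ball (0::'a) R2) \<and>
           measure lebesgue (\<Omega>0 - closure \<Theta>) = measure lebesgue (ball (0::'a) R2 - cball 0 R1) \<and>
           steklov_sigma p q \<Omega>0 \<Theta> \<ge> steklov_sigma p q (ball (0::'a) R2) (ball 0 R1) / 2
           \<longrightarrow> diameter \<Omega>0 \<le> C"
proof -
  have R2: "R2 > 0" using assms by linarith
  define Mb where "Mb = real DIM('a) * (2 * real DIM('a) * unit_ball_vol (DIM('a)) * (R2+1)^(DIM('a) - 1))"
  have Mb: "perimeter (ball (0::'a) R2) \<le> ereal Mb" unfolding Mb_def by (rule perimeter_ball_le[OF R2])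
  define V0 where "V0 = measure lebesgue (ball (0::'a) R2 - cball 0 R1)"
  have V0: "V0 > 0" unfolding V0_def by (rule annulus_pos) (use assms in auto)
  define \<omega> where "\<omega> = unit_ball_vol (real DIM('a))"
  have \<omega>: "\<omega> > 0" by (simp add: \<omega>_def)
  define C where "C = max 1 (16 * 24^DIM('a) * Mb / (\<omega> * (V0 / (4 * 12^DIM('a) * Mb))^(DIM('a) - 2)))"
  show ?thesis
  proof (intro exI[of _ C] conjI allI impI)
    show "C > 0" by (simp add: C_def)
    fix \<Omega>0 \<Theta> :: "'a set"
    assume H: "bounded \<Omega>0 \<and> open \<Omega>0 \<and> convex \<Omega>0 \<and>
           bounded \<Theta> \<and> open \<Theta> \<and> convex \<Theta> \<and> closure \<Theta> \<subseteq> \<Omega>0 \<and>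
           perimeter \<Omega>0 = perimeter (ball (0::'a) R2) \<and>
           measure lebesgue (\<Omega>0 - closure \<Theta>) = measure lebesgue (ball (0::'a) R2 - cball 0 R1) \<and>
           steklov_sigma p q \<Omega>0 \<Theta> \<ge> steklov_sigma p q (ball (0::'a) R2) (ball 0 R1) / 2"
    then have bdd: "bounded \<Omega>0" and op: "open \<Omega>0" and conv: "convex \<Omega>0"
      and per: "perimeter \<Omega>0 = perimeter (ball (0::'a) R2)"
      and meas: "measure lebesgue (\<Omega>0 - closure \<Theta>) = V0"
      by (auto simp: V0_def)
    have \<Omega>m: "\<Omega>0 \<in> lmeasurable" using bdd op by (simp add: bounded_set_imp_lmeasurable)
    define mO where "mO = measure lebesgue \<Omega>0"
    have m1: "V0 \<le> mO"
      unfolding mO_def meas[symmetric] by (rule measure_mono_fmeasurable) (use \<Omega>m in auto)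
    have ne: "\<Omega>0 \<noteq> {}" using m1 V0 by (auto simp: mO_def)
    define K where "K = closure \<Omega>0"
    have Kc: "compact K" using bdd by (simp add: K_def compact_closure)
    have Kv: "convex K" using conv by (simp add: K_def convex_closure)
    have OK: "\<Omega>0 \<subseteq> K" by (simp add: K_def closure_subset)
    have Ki: "interior K \<noteq> {}"
    proof -
      have "\<Omega>0 \<subseteq> interior K" by (rule interior_maximal[OF OK op])
      then show ?thesis using ne by auto
    qed
    obtain g r e c where r: "r > 0" and e: "norm e = 1" and gK: "cball g r \<subseteq> K"
      and sl: "\<forall>x\<in>K. \<bar>(x - c) \<bullet> e\<bar> \<le> 12^DIM('a) * r"
      using convex_body_ball_slab[OF Kc Kv Ki] by blast
    define h where "h = 12^DIM('a) * r"
    have h: "h > 0" using r by (simp add: h_def)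
    have "ereal (mO / (4 * h)) \<le> perimeter \<Omega>0"
      unfolding mO_def by (rule perimeter_slab_lower[OF bdd op e h]) (use sl OK in \<open>auto simp: h_def\<close>)
    also have "\<dots> \<le> ereal Mb" using per Mb by simp
    finally have "mO / (4 * h) \<le> Mb" by simp
    then have m2: "mO \<le> 4 * (12^DIM('a) * r) * Mb" using h by (simp add: h_def divide_le_eq mult.commute)
    have mK: "measure lebesgue K = mO"
    proof -
      have "K = \<Omega>0 \<union> frontier \<Omega>0" by (simp add: K_def closure_Un_frontier)
      moreover have "measure lebesgue (frontier \<Omega>0) = 0"
        by (rule negligible_imp_measure0[OF negligible_convex_frontier[OF conv]])
      moreover have "measure lebesgue (\<Omega>0 \<union> frontier \<Omega>0) \<le> measure lebesgue \<Omega>0 + measure lebesgue (frontier \<Omega>0)"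
        by (rule measure_Un_le) (use op in auto)
      moreover have "measure lebesgue \<Omega>0 \<le> measure lebesgue K"
        by (rule measure_mono_fmeasurable[OF OK]) (use Kc op in \<open>auto intro: lmeasurable_compact\<close>)
      ultimately show ?thesis by (simp add: mO_def)
    qed
    have KneE: "K \<noteq> {}" using ne OK by auto
    obtain x y where xy: "x \<in> K" "y \<in> K" "dist x y = diameter K"
      using diameter_compact_attained[OF Kc KneE] by blast
    have DK: "diameter \<Omega>0 = diameter K" by (simp add: K_def diameter_closure[OF bdd])
    define D where "D = diameter \<Omega>0"
    have D0: "D \<ge> 0" by (simp add: D_def diameter_ge_0[OF bdd])
    obtain pp where pp: "pp \<in> K" "norm (pp - g) \<ge> D / 2"
    proof -
      have "dist x y \<le> dist x g + dist g y" by (rule dist_triangle)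
      then have "D \<le> norm (x - g) + norm (y - g)" using xy DK
        by (simp add: D_def dist_norm norm_minus_commute)
      then have "norm (x - g) \<ge> D / 2 \<or> norm (y - g) \<ge> D / 2" by linarith
      then show ?thesis using that xy by blast
    qed
    have cv: "norm (pp - g) / (2 * r) * (unit_ball_vol (DIM('a)) * (r/2) ^ DIM('a)) \<le> measure lebesgue K"
      by (rule cone_volume[OF Kv lmeasurable_compact[OF Kc] gK pp(1) r])
    have m3: "(D/2) / (2*r) * (\<omega> * (r/2)^DIM('a)) \<le> mO"
    proof -
      have "(D/2) / (2*r) * (\<omega> * (r/2)^DIM('a)) \<le> norm (pp - g) / (2 * r) * (\<omega> * (r/2)^DIM('a))"
        by (intro mult_right_mono divide_right_mono pp(2)) (use r \<omega> in auto)
      then show ?thesis using cv mK by (simp add: \<omega>_def)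
    qed
    have "D \<le> 16 * 24^DIM('a) * Mb / (\<omega> * (V0 / (4 * 12^DIM('a) * Mb))^(DIM('a) - 2))"
      by (rule final_arith[OF assms(1) r \<omega> V0 D0 m1 m2 m3])
    then show "diameter \<Omega>0 \<le> C" unfolding C_def D_def by linarith
  qed
qed


end
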